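(* Let $M\in\mathbb{R}^{2n\times 2n}$ be symmetric positive definite, let $1\le k\le n$, and let $J_{2m}=\left[\begin{smallmatrix}0&I_m\\-I_m&0\end{smallmatrix}\right]$. Let $\tilde N=\operatorname{diag}(N,N)$ with $N=\operatorname{diag}(\nu_1,\ldots,\nu_k)$, $0<\nu_1<\nu_2<\cdots<\nu_k$. Consider the problem $$\min_{X\in\mathbb{R}^{2n\times 2k}} f(X):=\operatorname{tr}(\tilde N X^TMX)\quad\text{s.t.}\quad X^TJ_{2n}X=J_{2k}.$$ A matrix $X\in\mathbb{R}^{2n\times 2k}$ is a critical point of this problem (i.e. $X^TJ_{2n}X=J_{2k}$ and there is a skew-symmetric $L\in\mathbb{R}^{2k\times 2k}$ with $MX\tilde N=J_{2n}XL$) if and only if its columns form a symplectic eigenvector set of $M$, i.e. $X^TJ_{2n}X=J_{2k}$ and $$MX=J_{2n}X\begin{bmatrix}0&-\Delta\\ \Delta&0\end{bmatrix}$$ for some diagonal matrix $\Delta=\operatorname{diag}(d_{i_1},\ldots,d_{i_k})$ whose entries are symplectic eigenvalues of $M$ (indices $i_1,\ldots,i_k$ from $\{1,\ldots,n\}$).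
   Context: Symplectic eigenvalues are in the sense of Williamson's theorem: there is a symplectic $S$ ($S^TJ_{2n}S=J_{2n}$) with $S^TMS=\operatorname{diag}(D,D)$, $D=\operatorname{diag}(d_1,\ldots,d_n)$, $d_j>0$; the column pairs $[s_j,s_{n+j}]$ are symplectic eigenvectors associated with $d_j$. In the critical case one has $X^TMX=\operatorname{diag}(\Delta,\Delta)$ and Lagrange multiplier $L=\left[\begin{smallmatrix}0&-\Delta N\\ \Delta N&0\end{smallmatrix}\right]$. *)

theory Defs
  imports "Jordan_Normal_Form.Matrix"
begin

definition Jmat :: "nat \<Rightarrow> real mat" where
  "Jmat m = four_block_mat (0\<^sub>m m m) (1\<^sub>m m) (- 1\<^sub>m m) (0\<^sub>m m m)"

definition diag2 :: "real mat \<Rightarrow> real mat" where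
  "diag2 A = four_block_mat A (0\<^sub>m (dim_row A) (dim_col A)) (0\<^sub>m (dim_row A) (dim_col A)) A"

definition skew2 :: "real mat \<Rightarrow> real mat" where
  "skew2 A = four_block_mat (0\<^sub>m (dim_row A) (dim_col A)) (- A) A (0\<^sub>m (dim_row A) (dim_col A))"

definition sym_pos_def :: "nat \<Rightarrow> real mat \<Rightarrow> bool" where
  "sym_pos_def m M \<longleftrightarrow> M \<in> carrier_mat m m \<and> transpose_mat M = M \<and>
     (\<forall>v \<in> carrier_vec m. v \<noteq> 0\<^sub>v m \<longrightarrow> v \<bullet> (M *\<^sub>v v) > 0)"

definition symplectic :: "nat \<Rightarrow> real mat \<Rightarrow> bool" where
  "symplectic n S \<longleftrightarrow> S \<in> carrier_mat (2*n) (2*n) \<and> transpose_mat S * Jmat n * S = Jmat n"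

definition williamson :: "nat \<Rightarrow> real mat \<Rightarrow> real mat \<Rightarrow> real mat \<Rightarrow> bool" where
  "williamson n M S D \<longleftrightarrow> symplectic n S \<and> D \<in> carrier_mat n n \<and> diagonal_mat D \<and>
     (\<forall>j<n. D $$ (j,j) > 0) \<and> transpose_mat S * M * S = diag2 D"

definition symp_eigenvalue :: "nat \<Rightarrow> real mat \<Rightarrow> real \<Rightarrow> bool" where
  "symp_eigenvalue n M d \<longleftrightarrow> (\<exists>S D. williamson n M S D \<and> (\<exists>j<n. d = D $$ (j,j)))"

end

theory Submission
  imports Defs "Jordan_Normal_Form.Jordan_Normal_Form_Existence"
begin

lemma sym_sprod:
  fixes K :: "real mat"
  assumes K: "K \<in> carrier_mat N N" and s: "transpose_mat K = K"
    and a: "a \<in> carrier_vec N" and b: "b \<in> carrier_vec N"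
  shows "a \<bullet> (K *\<^sub>v b) = b \<bullet> (K *\<^sub>v a)"
proof -
  have "a \<bullet> (K *\<^sub>v b) = (transpose_mat K *\<^sub>v a) \<bullet> b"
    using transpose_vec_mult_scalar[OF K b a] by simp
  also have "\<dots> = b \<bullet> (K *\<^sub>v a)" using s comm_scalar_prod[of "K *\<^sub>v a" N b] K a b by simp
  finally show ?thesis .
qed

lemma diag_block_zero:
  assumes "\<And>A. A \<in> set As \<Longrightarrow> A = 0\<^sub>m (dim_row A) (dim_col A)"
  shows "diag_block_mat As = 0\<^sub>m (dim_row (diag_block_mat As)) (dim_col (diag_block_mat As))"
  using assms
proof (induct As)
  case Nil then show ?case by simp
next
  case (Cons A As)
  have IH: "diag_block_mat As = 0\<^sub>m (dim_row (diag_block_mat As)) (dim_col (diag_block_mat As))"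
    using Cons by auto
  have A: "A = 0\<^sub>m (dim_row A) (dim_col A)" using Cons by auto
  have A0: "\<And>i j. i < dim_row A \<Longrightarrow> j < dim_col A \<Longrightarrow> A $$ (i,j) = 0"
    by (subst A, simp)
  have B0: "\<And>i j. i < dim_row (diag_block_mat As) \<Longrightarrow> j < dim_col (diag_block_mat As) \<Longrightarrow> diag_block_mat As $$ (i,j) = 0"
    by (subst IH, simp)
  show ?case
  proof (rule eq_matI)
    fix i j assume ij: "i < dim_row (0\<^sub>m (dim_row (diag_block_mat (A # As))) (dim_col (diag_block_mat (A # As))))"
      "j < dim_col (0\<^sub>m (dim_row (diag_block_mat (A # As))) (dim_col (diag_block_mat (A # As))))"
    then show "diag_block_mat (A # As) $$ (i, j) = 0\<^sub>m (dim_row (diag_block_mat (A # As))) (dim_col (diag_block_mat (A # As))) $$ (i, j)"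
      using A0 B0 by (auto simp: Let_def)
  qed auto
qed

lemma mat_vec_zero[simp]: "(A :: 'a :: comm_ring_1 mat) \<in> carrier_mat nr nc \<Longrightarrow> A *\<^sub>v 0\<^sub>v nc = 0\<^sub>v nr"
  by (intro eq_vecI, auto simp: scalar_prod_def)

lemma zero_mat_vec[simp]: "v \<in> carrier_vec nc \<Longrightarrow> (0\<^sub>m nr nc :: 'a :: comm_ring_1 mat) *\<^sub>v v = 0\<^sub>v nr"
  by (intro eq_vecI, auto simp: scalar_prod_def)

lemma spd_pos: "sym_pos_def N M \<Longrightarrow> x \<in> carrier_vec N \<Longrightarrow> x \<noteq> 0\<^sub>v N \<Longrightarrow> x \<bullet> (M *\<^sub>v x) > 0"
  unfolding sym_pos_def_def by auto

lemma spd_nonneg: "sym_pos_def N M \<Longrightarrow> x \<in> carrier_vec N \<Longrightarrow> x \<bullet> (M *\<^sub>v x) \<ge> 0"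
  using spd_pos[of N M x] unfolding sym_pos_def_def by (cases "x = 0\<^sub>v N", auto)

lemma Re_ofreal_mult: "Re (complex_of_real r * z) = r * Re z" by simp
lemma Im_ofreal_mult: "Im (complex_of_real r * z) = r * Im z" by simp

lemma real_eig_nonzero:
  fixes E M :: "real mat"
  assumes E: "E \<in> carrier_mat N N" and M: "sym_pos_def N M"
    and sym: "transpose_mat (M * E) = M * E"
    and z0: "z0 \<in> carrier_vec N" "E *\<^sub>v z0 \<noteq> 0\<^sub>v N"
  shows "\<exists>l z. l \<noteq> 0 \<and> z \<in> carrier_vec N \<and> z \<noteq> 0\<^sub>v N \<and> E *\<^sub>v z = l \<cdot>\<^sub>v z"
proof -
  have Mc: "M \<in> carrier_mat N N" and Mt: "transpose_mat M = M" using M unfolding sym_pos_def_def by auto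
  define K where "K = M * E"
  have Kc: "K \<in> carrier_mat N N" unfolding K_def using Mc E by auto
  have Kt: "transpose_mat K = K" using sym unfolding K_def .
  have KE: "\<And>w. w \<in> carrier_vec N \<Longrightarrow> K *\<^sub>v w = M *\<^sub>v (E *\<^sub>v w)"
    unfolding K_def using Mc E by simp
  have kern: "E *\<^sub>v w = 0\<^sub>v N" if w: "w \<in> carrier_vec N" and h: "E *\<^sub>v (E *\<^sub>v w) = 0\<^sub>v N" for w
  proof (rule ccontr)
    assume ne: "E *\<^sub>v w \<noteq> 0\<^sub>v N"
    let ?y = "E *\<^sub>v w"
    have y: "?y \<in> carrier_vec N" using E w by simp
    have "?y \<bullet> (M *\<^sub>v ?y) = ?y \<bullet> (K *\<^sub>v w)" using KE[OF w] by simp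
    also have "\<dots> = w \<bullet> (K *\<^sub>v ?y)" by (rule sym_sprod[OF Kc Kt y w])
    also have "\<dots> = 0" using KE[OF y] h w Mc by simp
    finally show False using spd_pos[OF M y ne] by simp
  qed
  have powk: "E *\<^sub>v w = 0\<^sub>v N" if "w \<in> carrier_vec N" "(E ^\<^sub>m j) *\<^sub>v (E *\<^sub>v w) = 0\<^sub>v N" for j w
    using that
  proof (induct j arbitrary: w)
    case 0
    then show ?case using E by simp
  next
    case (Suc j)
    have "(E ^\<^sub>m Suc j) *\<^sub>v (E *\<^sub>v w) = (E ^\<^sub>m j) *\<^sub>v (E *\<^sub>v (E *\<^sub>v w))"
      using E Suc(2) by (simp add: assoc_mult_mat_vec[of _ N N _ N])
    with Suc have "E *\<^sub>v (E *\<^sub>v w) = 0\<^sub>v N" using E by (intro Suc(1), auto)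
    then show ?case using kern Suc(2) by blast
  qed
  let ?Ec = "map_mat complex_of_real E"
  have Ec: "?Ec \<in> carrier_mat N N" using E by simp
  obtain as where "char_poly ?Ec = (\<Prod>a\<leftarrow>as. [:- a, 1:])" using char_poly_factorized[OF Ec] by blast
  from jordan_nf_exists[OF Ec this] obtain n_as where jnf: "jordan_nf ?Ec n_as" by blast
  show ?thesis
  proof (cases "\<exists>m a. (m,a) \<in> set n_as \<and> a \<noteq> 0")
    case True
    then obtain m a where ma: "(m,a) \<in> set n_as" "a \<noteq> 0" by blast
    have m0: "m \<noteq> 0" using jnf ma unfolding jordan_nf_def by force
    have pa: "poly ([:- a, 1:] ^ m) a = 0" using m0 by (simp add: poly_power)
    have "poly (char_poly ?Ec) a = 0"
      unfolding jordan_nf_char_poly[OF jnf] poly_prod_list prod_list_zero_iff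
      using ma pa by force
    then have "eigenvalue ?Ec a" using eigenvalue_root_char_poly[OF Ec] by simp
    then obtain v where v: "v \<in> carrier_vec N" "v \<noteq> 0\<^sub>v N" "?Ec *\<^sub>v v = a \<cdot>\<^sub>v v"
      unfolding eigenvalue_def eigenvector_def using Ec by auto
    define x where "x = vec N (\<lambda>i. Re (v $ i))"
    define y where "y = vec N (\<lambda>i. Im (v $ i))"
    have x: "x \<in> carrier_vec N" and y: "y \<in> carrier_vec N" unfolding x_def y_def by auto
    have ci: "(\<Sum>j = 0..<N. complex_of_real (E $$ (i,j)) * v $ j) = a * v $ i" if i: "i < N" for i
    proof -
      have "(?Ec *\<^sub>v v) $ i = (a \<cdot>\<^sub>v v) $ i" using v(3) by simp
      then show ?thesis using i E v(1) by (simp add: scalar_prod_def)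
    qed
    have Ex: "E *\<^sub>v x = Re a \<cdot>\<^sub>v x - Im a \<cdot>\<^sub>v y"
    proof (rule eq_vecI)
      fix i assume "i < dim_vec (Re a \<cdot>\<^sub>v x - Im a \<cdot>\<^sub>v y)"
      then have i: "i < N" using x y by simp
      have "Re (\<Sum>j = 0..<N. complex_of_real (E $$ (i,j)) * v $ j) = Re (a * v $ i)" using ci[OF i] by simp
      then show "(E *\<^sub>v x) $ i = (Re a \<cdot>\<^sub>v x - Im a \<cdot>\<^sub>v y) $ i"
        using i E x y by (simp add: scalar_prod_def x_def y_def Re_sum)
    qed (insert E x y, auto)
    have Ey: "E *\<^sub>v y = Im a \<cdot>\<^sub>v x + Re a \<cdot>\<^sub>v y"
    proof (rule eq_vecI)
      fix i assume "i < dim_vec (Im a \<cdot>\<^sub>v x + Re a \<cdot>\<^sub>v y)"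
      then have i: "i < N" using x y by simp
      have "Im (\<Sum>j = 0..<N. complex_of_real (E $$ (i,j)) * v $ j) = Im (a * v $ i)" using ci[OF i] by simp
      then show "(E *\<^sub>v y) $ i = (Im a \<cdot>\<^sub>v x + Re a \<cdot>\<^sub>v y) $ i"
        using i E x y by (simp add: scalar_prod_def x_def y_def Im_sum)
    qed (insert E x y, auto)
    have Mx: "M *\<^sub>v x \<in> carrier_vec N" and My: "M *\<^sub>v y \<in> carrier_vec N" using Mc x y by auto
    have "x \<bullet> (K *\<^sub>v y) = y \<bullet> (K *\<^sub>v x)" by (rule sym_sprod[OF Kc Kt x y])
    moreover have "x \<bullet> (K *\<^sub>v y) = Im a * (x \<bullet> (M *\<^sub>v x)) + Re a * (x \<bullet> (M *\<^sub>v y))"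
      unfolding KE[OF y] Ey using Mc x y Mx My
      by (simp add: mult_add_distrib_mat_vec[of _ N N] mult_mat_vec[of _ N N] scalar_prod_add_distrib[of _ N])
    moreover have "y \<bullet> (K *\<^sub>v x) = Re a * (y \<bullet> (M *\<^sub>v x)) - Im a * (y \<bullet> (M *\<^sub>v y))"
      unfolding KE[OF x] Ex using Mc x y Mx My
      by (simp add: mult_minus_distrib_mat_vec[of _ N N] mult_mat_vec[of _ N N] scalar_prod_minus_distrib[of _ N])
    moreover have "x \<bullet> (M *\<^sub>v y) = y \<bullet> (M *\<^sub>v x)" by (rule sym_sprod[OF Mc Mt x y])
    ultimately have eq: "Im a * (x \<bullet> (M *\<^sub>v x) + y \<bullet> (M *\<^sub>v y)) = 0" by (simp add: algebra_simps)
    have xy: "x \<noteq> 0\<^sub>v N \<or> y \<noteq> 0\<^sub>v N"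
    proof (rule ccontr)
      assume "\<not> ?thesis"
      then have "x = 0\<^sub>v N" "y = 0\<^sub>v N" by auto
      then have xy0: "x $ i = 0" "y $ i = 0" if "i < N" for i using that by auto
      have "v = 0\<^sub>v N"
      proof (rule eq_vecI)
        fix i assume "i < dim_vec (0\<^sub>v N :: complex vec)"
        then have i: "i < N" by simp
        show "v $ i = 0\<^sub>v N $ i" using xy0[OF i] i by (simp add: x_def y_def complex_eq_iff)
      qed (insert v(1), simp)
      with v(2) show False by simp
    qed
    have "x \<bullet> (M *\<^sub>v x) + y \<bullet> (M *\<^sub>v y) > 0"
      using xy spd_pos[OF M x] spd_pos[OF M y] spd_nonneg[OF M x] spd_nonneg[OF M y] by force
    with eq have Im0: "Im a = 0" by simp
    with ma(2) have Re0: "Re a \<noteq> 0" by (simp add: complex_eq_iff)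
    have Ex': "E *\<^sub>v x = Re a \<cdot>\<^sub>v x" using Ex Im0 x y by auto
    have Ey': "E *\<^sub>v y = Re a \<cdot>\<^sub>v y" using Ey Im0 x y by auto
    show ?thesis using xy Ex' Ey' Re0 x y by blast
  next
    case False
    obtain P Q where PQ: "P \<in> carrier_mat N N" "Q \<in> carrier_mat N N"
      and pw: "\<And>k. ?Ec ^\<^sub>m k = P * (jordan_matrix n_as) ^\<^sub>m k * Q"
      by (rule jordan_nf_powE[OF Ec jnf], blast)
    have "similar_mat ?Ec (jordan_matrix n_as)" using jnf unfolding jordan_nf_def by auto
    from similar_matD[OF this] obtain n' where n': "?Ec \<in> carrier_mat n' n'" "jordan_matrix n_as \<in> carrier_mat n' n'"
      by blast
    have "n' = N" using n'(1) Ec by auto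
    then have dimJ: "sum_list (map fst n_as) = N" using n'(2) jordan_matrix_dim(1)[of n_as] by auto
    have blocks: "B = 0\<^sub>m (dim_row B) (dim_col B)"
      if B: "B \<in> set (map (\<lambda>(n, a). jordan_block n a ^\<^sub>m N) n_as)" for B
    proof -
      from B obtain m a where ma: "(m,a) \<in> set n_as" and Bd: "B = jordan_block m a ^\<^sub>m N" by auto
      have a0: "a = 0" using False ma by auto
      have mN: "m \<le> N" using member_le_sum_list[of m "map fst n_as"] ma dimJ by force
      show ?thesis unfolding Bd a0 jordan_block_zero_pow
        by (rule eq_matI, insert mN, auto)
    qed
    have JN: "(jordan_matrix n_as) ^\<^sub>m N = 0\<^sub>m N N"
    proof -
      have eq1: "(jordan_matrix n_as) ^\<^sub>m N = diag_block_mat (map (\<lambda>(n, a). jordan_block n a ^\<^sub>m N) n_as)"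
        by (rule jordan_matrix_pow)
      have r: "dim_row (diag_block_mat (map (\<lambda>(n, a). jordan_block n a ^\<^sub>m N) n_as)) = N"
        by (subst eq1[symmetric], simp add: dimJ)
      have c: "dim_col (diag_block_mat (map (\<lambda>(n, a). jordan_block n a ^\<^sub>m N) n_as)) = N"
        by (subst eq1[symmetric], simp add: dimJ)
      have "diag_block_mat (map (\<lambda>(n, a). jordan_block n a ^\<^sub>m N) n_as) = 0\<^sub>m N N"
        using diag_block_zero[of "map (\<lambda>(n, a). jordan_block n a ^\<^sub>m N) n_as", OF blocks] unfolding r c .
      then show ?thesis using eq1 by simp
    qed
    have EcN: "?Ec ^\<^sub>m N = 0\<^sub>m N N" unfolding pw JN using PQ by simp
    have "map_mat complex_of_real (E ^\<^sub>m N) = 0\<^sub>m N N"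
      unfolding of_real_hom.mat_hom_pow[OF E] by (rule EcN)
    note h = this
    have EN: "E ^\<^sub>m N = 0\<^sub>m N N"
    proof (rule eq_matI)
      fix i j assume "i < dim_row (0\<^sub>m N N :: real mat)" "j < dim_col (0\<^sub>m N N :: real mat)"
      then have ij: "i < N" "j < N" by auto
      have "map_mat complex_of_real (E ^\<^sub>m N) $$ (i,j) = 0\<^sub>m N N $$ (i,j)" using h by simp
      then show "(E ^\<^sub>m N) $$ (i, j) = 0\<^sub>m N N $$ (i, j)" using ij E by simp
    qed (insert E, auto)
    have "(E ^\<^sub>m N) *\<^sub>v (E *\<^sub>v z0) = 0\<^sub>v N" unfolding EN using E z0 by (simp add: zero_mat_vec[of _ N])
    from powk[OF z0(1) this] z0(2) show ?thesis by simp
  qed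
qed

lemma Jc[simp]: "Jmat n \<in> carrier_mat (2*n) (2*n)"
  unfolding Jmat_def by (metis four_block_carrier_mat mult_2 zero_carrier_mat)

lemma Jdim[simp]: "dim_row (Jmat n) = 2*n" "dim_col (Jmat n) = 2*n"
  by (rule carrier_matD(1)[OF Jc], rule carrier_matD(2)[OF Jc])

lemma Jv_carrier[simp]: "w \<in> carrier_vec (2*n) \<Longrightarrow> Jmat n *\<^sub>v w \<in> carrier_vec (2*n)"
  by (rule mult_mat_vec_carrier[OF Jc])

lemma J_index: "i < 2*n \<Longrightarrow> j < 2*n \<Longrightarrow> Jmat n $$ (i,j) =
   (if i < n then (if j = i + n then 1 else 0) else (if i = j + n then -1 else 0))"
  unfolding Jmat_def by (subst index_mat_four_block, auto)

lemma J_mult_vec: assumes w: "w \<in> carrier_vec (2*n)" and i: "i < 2*n"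
  shows "(Jmat n *\<^sub>v w) $ i = (if i < n then w $ (i + n) else - w $ (i - n))"
proof -
  have "(Jmat n *\<^sub>v w) $ i = (\<Sum>j = 0..<2*n. Jmat n $$ (i,j) * w $ j)"
    using w i by (simp add: scalar_prod_def)
  also have "\<dots> = (\<Sum>j = 0..<2*n. (if i < n then (if j = i + n then w $ j else 0) else (if i = j + n then - w $ j else 0)))"
    by (rule sum.cong, auto simp: J_index i)
  also have "\<dots> = (if i < n then w $ (i + n) else - w $ (i - n))"
  proof (cases "i < n")
    case True then show ?thesis by (simp add: sum.delta'[of "{0..<2*n}"])
  next
    case False
    have "(\<Sum>j = 0..<2*n. (if i = j + n then - w $ j else 0)) = (\<Sum>j = 0..<2*n. (if j = i - n then - w $ j else 0))"
      by (rule sum.cong, insert False, auto)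
    then show ?thesis using False i by (simp add: sum.delta')
  qed
  finally show ?thesis .
qed

lemma J_transpose: "transpose_mat (Jmat n) = - Jmat n"
  by (rule eq_matI, auto simp: J_index)

lemma JJ_vec: "w \<in> carrier_vec (2*n) \<Longrightarrow> Jmat n *\<^sub>v (Jmat n *\<^sub>v w) = - w"
proof (rule eq_vecI)
  fix i assume w: "w \<in> carrier_vec (2*n)" and "i < dim_vec (- w)"
  then have i: "i < 2*n" by simp
  have "i - n < n" using i by arith
  show "(Jmat n *\<^sub>v (Jmat n *\<^sub>v w)) $ i = (- w) $ i"
    unfolding J_mult_vec[OF Jv_carrier[OF w] i] using w i \<open>i - n < n\<close>
    by (simp add: J_mult_vec[OF w] del: index_mult_mat_vec)
qed simp

lemma omega_antisym: assumes a: "a \<in> carrier_vec (2*n)" and b: "b \<in> carrier_vec (2*n)"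
  shows "a \<bullet> (Jmat n *\<^sub>v b) = - (b \<bullet> (Jmat n *\<^sub>v a))"
proof -
  have "a \<bullet> (Jmat n *\<^sub>v b) = (transpose_mat (Jmat n) *\<^sub>v a) \<bullet> b"
    using transpose_vec_mult_scalar[OF Jc b a] by simp
  also have "\<dots> = - ((Jmat n *\<^sub>v a) \<bullet> b)" unfolding J_transpose using a b
    by (simp add: scalar_prod_uminus_left)
  also have "(Jmat n *\<^sub>v a) \<bullet> b = b \<bullet> (Jmat n *\<^sub>v a)" using a b
    by (intro comm_scalar_prod[of _ "2*n"], auto simp del: index_mult_mat_vec)
  finally show ?thesis .
qed

lemma omega_self: "a \<in> carrier_vec (2*n) \<Longrightarrow> a \<bullet> (Jmat n *\<^sub>v a) = 0"
  using omega_antisym[of a n a] by simp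

lemma spd_inverse: assumes M: "sym_pos_def N M"
  shows "\<exists>Mi. Mi \<in> carrier_mat N N \<and> M * Mi = 1\<^sub>m N \<and> Mi * M = 1\<^sub>m N"
proof -
  have Mc: "M \<in> carrier_mat N N" using M unfolding sym_pos_def_def by auto
  have "det M \<noteq> 0"
  proof
    assume "det M = 0"
    then obtain v where v: "v \<in> carrier_vec N" "v \<noteq> 0\<^sub>v N" "M *\<^sub>v v = 0\<^sub>v N"
      using det_0_iff_vec_prod_zero_field[OF Mc] by blast
    then show False using spd_pos[OF M v(1,2)] by simp
  qed
  from det_non_zero_imp_unit[OF Mc this, of "()"]
  show ?thesis unfolding Units_def ring_mat_def by auto
qed

definition fam :: "nat \<Rightarrow> real mat \<Rightarrow> nat \<Rightarrow> (nat \<Rightarrow> real vec) \<Rightarrow> (nat \<Rightarrow> real vec) \<Rightarrow> (nat \<Rightarrow> real) \<Rightarrow> bool" where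
 "fam n M m U V ds \<longleftrightarrow> (\<forall>i<m. U i \<in> carrier_vec (2*n) \<and> V i \<in> carrier_vec (2*n) \<and> ds i > 0 \<and>
     M *\<^sub>v U i = ds i \<cdot>\<^sub>v (Jmat n *\<^sub>v V i) \<and> M *\<^sub>v V i = (- ds i) \<cdot>\<^sub>v (Jmat n *\<^sub>v U i)) \<and>
   (\<forall>i<m. \<forall>j<m. U i \<bullet> (Jmat n *\<^sub>v U j) = 0 \<and> V i \<bullet> (Jmat n *\<^sub>v V j) = 0 \<and>
      U i \<bullet> (Jmat n *\<^sub>v V j) = (if i = j then 1 else 0))"

lemma tAB: assumes A: "A \<in> carrier_mat N N'" and B: "B \<in> carrier_mat N N" and a: "a < N'" and b: "b < N'"
  shows "(transpose_mat A * B * A) $$ (a,b) = col A a \<bullet> (B *\<^sub>v col A b)"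
proof -
  have "transpose_mat A * B * A = transpose_mat A * (B * A)"
    using A B by (intro assoc_mult_mat[of _ N' N _ N _ N'], auto)
  then show ?thesis using A B a b by (simp add: mult_mat_vec_def)
qed

lemma fam_williamson:
  assumes M: "sym_pos_def (2*n) M" and F: "fam n M n U V ds"
  shows "williamson n M (mat (2*n) (2*n) (\<lambda>(a,b). if b < n then U b $ a else V (b-n) $ a)) (mat_diag n ds)"
proof -
  let ?S = "mat (2*n) (2*n) (\<lambda>(a,b). if b < n then U b $ a else V (b-n) $ a)"
  let ?J = "Jmat n"
  have Mc: "M \<in> carrier_mat (2*n) (2*n)" using M unfolding sym_pos_def_def by auto
  have Sc: "?S \<in> carrier_mat (2*n) (2*n)" by simp
  have Uc: "\<And>i. i < n \<Longrightarrow> U i \<in> carrier_vec (2*n)" and Vc: "\<And>i. i < n \<Longrightarrow> V i \<in> carrier_vec (2*n)"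
    and dpos: "\<And>i. i < n \<Longrightarrow> ds i > 0"
    and MU: "\<And>i. i < n \<Longrightarrow> M *\<^sub>v U i = ds i \<cdot>\<^sub>v (?J *\<^sub>v V i)"
    and MV: "\<And>i. i < n \<Longrightarrow> M *\<^sub>v V i = (- ds i) \<cdot>\<^sub>v (?J *\<^sub>v U i)"
    and UU: "\<And>i j. i < n \<Longrightarrow> j < n \<Longrightarrow> U i \<bullet> (?J *\<^sub>v U j) = 0"
    and VV: "\<And>i j. i < n \<Longrightarrow> j < n \<Longrightarrow> V i \<bullet> (?J *\<^sub>v V j) = 0"
    and UV: "\<And>i j. i < n \<Longrightarrow> j < n \<Longrightarrow> U i \<bullet> (?J *\<^sub>v V j) = (if i = j then 1 else 0)"
    using F unfolding fam_def by auto
  have VU: "V i \<bullet> (?J *\<^sub>v U j) = (if i = j then -1 else 0)" if "i < n" "j < n" for i j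
    using omega_antisym[OF Vc[OF that(1)] Uc[OF that(2)]] UV[OF that(2,1)] by auto
  have colU: "col ?S b = U b" if "b < n" for b
    by (rule eq_vecI, insert that Uc[OF that], auto)
  have colV: "col ?S b = V (b - n)" if "n \<le> b" "b < 2*n" for b
  proof -
    have "b - n < n" using that by arith
    then show ?thesis by (intro eq_vecI, insert that Vc[of "b - n"], auto)
  qed
  have sympl: "transpose_mat ?S * ?J * ?S = ?J"
  proof (rule eq_matI)
    fix a b assume "a < dim_row ?J" "b < dim_col ?J"
    then have a: "a < 2*n" and b: "b < 2*n" by auto
    show "(transpose_mat ?S * ?J * ?S) $$ (a,b) = ?J $$ (a,b)"
      unfolding tAB[OF Sc Jc a b] J_index[OF a b]
      using a b colU colV UU VV UV VU
      by (cases "a < n"; cases "b < n"; auto)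
  qed auto
  have UMU: "U i \<bullet> (M *\<^sub>v U j) = (if i = j then ds j else 0)" if "i < n" "j < n" for i j
    unfolding MU[OF that(2)] using that Uc Vc UV by auto
  have UMV: "U i \<bullet> (M *\<^sub>v V j) = 0" if "i < n" "j < n" for i j
    unfolding MV[OF that(2)] using that Uc Vc UU by auto
  have VMU: "V i \<bullet> (M *\<^sub>v U j) = 0" if "i < n" "j < n" for i j
    unfolding MU[OF that(2)] using that Uc Vc VV by auto
  have VMV: "V i \<bullet> (M *\<^sub>v V j) = (if i = j then ds j else 0)" if "i < n" "j < n" for i j
    unfolding MV[OF that(2)] using that Uc Vc VU by auto
  have diag: "transpose_mat ?S * M * ?S = diag2 (mat_diag n ds)"
  proof (rule eq_matI)
    fix a b assume "a < dim_row (diag2 (mat_diag n ds))" "b < dim_col (diag2 (mat_diag n ds))"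
    then have a: "a < 2*n" and b: "b < 2*n" unfolding diag2_def by (auto simp: mat_diag_def)
    show "(transpose_mat ?S * M * ?S) $$ (a,b) = diag2 (mat_diag n ds) $$ (a,b)"
      unfolding tAB[OF Sc Mc a b] diag2_def
      using a b colU colV UMU UMV VMU VMV
      by (cases "a < n"; cases "b < n"; auto simp: mat_diag_def)
  qed (auto simp: diag2_def mat_diag_def)
  show ?thesis unfolding williamson_def symplectic_def
    using Sc sympl diag dpos by (auto simp: diagonal_mat_def mat_diag_def)
qed

lemma fam_step:
  assumes M: "sym_pos_def (2*n) M" and F: "fam n M m U V ds" and mn: "m < n"
  shows "\<exists>u v d. fam n M (Suc m) (U(m:=u)) (V(m:=v)) (ds(m:=d))"
proof -
  let ?N = "2*n"
  let ?J = "Jmat n"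
  have Mc: "M \<in> carrier_mat ?N ?N" and Mt: "transpose_mat M = M" using M unfolding sym_pos_def_def by auto
  have Uc: "\<And>i. i < m \<Longrightarrow> U i \<in> carrier_vec ?N" and Vc: "\<And>i. i < m \<Longrightarrow> V i \<in> carrier_vec ?N"
    and dpos: "\<And>i. i < m \<Longrightarrow> ds i > 0"
    and MU: "\<And>i. i < m \<Longrightarrow> M *\<^sub>v U i = ds i \<cdot>\<^sub>v (?J *\<^sub>v V i)"
    and MV: "\<And>i. i < m \<Longrightarrow> M *\<^sub>v V i = (- ds i) \<cdot>\<^sub>v (?J *\<^sub>v U i)"
    and UU: "\<And>i j. i < m \<Longrightarrow> j < m \<Longrightarrow> U i \<bullet> (?J *\<^sub>v U j) = 0"
    and VV: "\<And>i j. i < m \<Longrightarrow> j < m \<Longrightarrow> V i \<bullet> (?J *\<^sub>v V j) = 0"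
    and UV: "\<And>i j. i < m \<Longrightarrow> j < m \<Longrightarrow> U i \<bullet> (?J *\<^sub>v V j) = (if i = j then 1 else 0)"
    using F unfolding fam_def by auto
  have VU: "V i \<bullet> (?J *\<^sub>v U j) = (if i = j then -1 else 0)" if "i < m" "j < m" for i j
    using omega_antisym[OF Vc[OF that(1)] Uc[OF that(2)]] UV[OF that(2,1)] by auto
  obtain Mi where Mic: "Mi \<in> carrier_mat ?N ?N" and MMi: "M * Mi = 1\<^sub>m ?N" and MiM: "Mi * M = 1\<^sub>m ?N"
    using spd_inverse[OF M] by blast
  have Mit: "transpose_mat Mi = Mi"
  proof -
    have "transpose_mat Mi * M = transpose_mat (M * Mi)"
      using transpose_mult[OF Mc Mic] Mt by simp
    then have tm: "transpose_mat Mi * M = 1\<^sub>m ?N" using MMi by simp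
    have "transpose_mat Mi = transpose_mat Mi * (M * Mi)" using MMi Mic by simp
    also have "\<dots> = (transpose_mat Mi * M) * Mi" using Mic Mc by (simp add: assoc_mult_mat[of _ ?N ?N _ ?N _ ?N])
    also have "\<dots> = Mi" unfolding tm using Mic by simp
    finally show ?thesis .
  qed
  have MMiv: "M *\<^sub>v (Mi *\<^sub>v x) = x" if "x \<in> carrier_vec ?N" for x
    using that Mc Mic MMi by (simp add: assoc_mult_mat_vec[symmetric, of _ ?N ?N _ ?N])
  have MiMv: "Mi *\<^sub>v (M *\<^sub>v x) = x" if "x \<in> carrier_vec ?N" for x
    using that Mc Mic MiM by (simp add: assoc_mult_mat_vec[symmetric, of _ ?N ?N _ ?N])
  have Msym: "x \<bullet> (M *\<^sub>v y) = y \<bullet> (M *\<^sub>v x)" if "x \<in> carrier_vec ?N" "y \<in> carrier_vec ?N" for x y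
    by (rule sym_sprod[OF Mc Mt that])
  have cUdot: "(M *\<^sub>v U i) \<bullet> x = ds i * (x \<bullet> (?J *\<^sub>v V i))" if "i < m" "x \<in> carrier_vec ?N" for i x
  proof -
    have "(M *\<^sub>v U i) \<bullet> x = x \<bullet> (M *\<^sub>v U i)"
      using that Uc Mc by (intro comm_scalar_prod[of _ ?N], auto)
    also have "\<dots> = ds i * (x \<bullet> (?J *\<^sub>v V i))" unfolding MU[OF that(1)] using that Vc by simp
    finally show ?thesis .
  qed
  have cVdot: "(M *\<^sub>v V i) \<bullet> x = - ds i * (x \<bullet> (?J *\<^sub>v U i))" if "i < m" "x \<in> carrier_vec ?N" for i x
  proof -
    have "(M *\<^sub>v V i) \<bullet> x = x \<bullet> (M *\<^sub>v V i)"
      using that Vc Mc by (intro comm_scalar_prod[of _ ?N], auto)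
    also have "\<dots> = - ds i * (x \<bullet> (?J *\<^sub>v U i))" unfolding MV[OF that(1)] using that Uc by simp
    finally show ?thesis .
  qed
  (* the deflated matrix *)
  define K0 where "K0 = ?J * Mi * ?J"
  have K0c: "K0 \<in> carrier_mat ?N ?N" unfolding K0_def using Mic by auto
  have K0v: "K0 *\<^sub>v x = ?J *\<^sub>v (Mi *\<^sub>v (?J *\<^sub>v x))" if "x \<in> carrier_vec ?N" for x
  proof -
    have JMi: "?J * Mi \<in> carrier_mat ?N ?N" by (rule mult_carrier_mat[OF Jc Mic])
    have "K0 *\<^sub>v x = (?J * Mi) *\<^sub>v (?J *\<^sub>v x)"
      unfolding K0_def by (rule assoc_mult_mat_vec[OF JMi Jc that])
    also have "\<dots> = ?J *\<^sub>v (Mi *\<^sub>v (?J *\<^sub>v x))"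
      by (rule assoc_mult_mat_vec[OF Jc Mic], simp add: that)
    finally show ?thesis .
  qed
  have K0t: "transpose_mat K0 = K0"
  proof -
    have "transpose_mat K0 = transpose_mat ?J * transpose_mat (?J * Mi)"
      unfolding K0_def using Mic by (intro transpose_mult[of _ ?N ?N], auto)
    also have "\<dots> = transpose_mat ?J * (transpose_mat Mi * transpose_mat ?J)"
      using Mic by (subst transpose_mult[of _ ?N ?N], auto)
    also have "\<dots> = ?J * (Mi * ?J)"
    proof -
      have e1: "Mi * - ?J = - (Mi * ?J)" by (rule uminus_mult_right_mat, insert Mic, simp)
      have e2: "- ?J * (- (Mi * ?J)) = - (?J * (- (Mi * ?J)))" by (rule uminus_mult_left_mat, insert Mic, simp)
      have e3: "?J * (- (Mi * ?J)) = - (?J * (Mi * ?J))" by (rule uminus_mult_right_mat, insert Mic, simp)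
      show ?thesis unfolding Mit J_transpose e1 e2 e3 by simp
    qed
    also have "\<dots> = K0" unfolding K0_def using Mic by (simp add: assoc_mult_mat[of _ ?N ?N _ ?N _ ?N])
    finally show ?thesis .
  qed
  define cf where "cf = (\<lambda>a b. (\<Sum>i<m. ((M *\<^sub>v U i) $ a * (M *\<^sub>v U i) $ b + (M *\<^sub>v V i) $ a * (M *\<^sub>v V i) $ b) / ds i ^ 3))"
  define K where "K = mat ?N ?N (\<lambda>(a,b). K0 $$ (a,b) + cf a b)"
  have Kc: "K \<in> carrier_mat ?N ?N" unfolding K_def by simp
  have Kt: "transpose_mat K = K"
  proof (rule eq_matI)
    fix a b assume "a < dim_row K" "b < dim_col K"
    then have a: "a < ?N" and b: "b < ?N" unfolding K_def by auto
    have "K0 $$ (b,a) = K0 $$ (a,b)" using K0t a b K0c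
      by (metis carrier_matD index_transpose_mat(1))
    moreover have "cf b a = cf a b" unfolding cf_def by (simp add: ac_simps)
    ultimately show "transpose_mat K $$ (a,b) = K $$ (a,b)" unfolding K_def using a b by simp
  qed (auto simp: K_def)
  have Kv: "(K *\<^sub>v x) $ a = (K0 *\<^sub>v x) $ a + (\<Sum>i<m. (((M *\<^sub>v U i) \<bullet> x) * (M *\<^sub>v U i) $ a + ((M *\<^sub>v V i) \<bullet> x) * (M *\<^sub>v V i) $ a) / ds i ^ 3)"
    if x: "x \<in> carrier_vec ?N" and a: "a < ?N" for x a
  proof -
    have "(K *\<^sub>v x) $ a = (\<Sum>b = 0..<?N. (K0 $$ (a,b) + cf a b) * x $ b)"
      unfolding K_def using x a by (simp add: scalar_prod_def)
    also have "\<dots> = (\<Sum>b = 0..<?N. K0 $$ (a,b) * x $ b) + (\<Sum>b = 0..<?N. cf a b * x $ b)"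
      by (simp add: algebra_simps sum.distrib)
    also have "(\<Sum>b = 0..<?N. K0 $$ (a,b) * x $ b) = (K0 *\<^sub>v x) $ a"
      using K0c x a by (simp add: scalar_prod_def)
    also have "(\<Sum>b = 0..<?N. cf a b * x $ b) = (\<Sum>b = 0..<?N. \<Sum>i<m. ((M *\<^sub>v U i) $ a * ((M *\<^sub>v U i) $ b * x $ b) + (M *\<^sub>v V i) $ a * ((M *\<^sub>v V i) $ b * x $ b)) / ds i ^ 3)"
      unfolding cf_def sum_distrib_right by (rule sum.cong, simp, rule sum.cong, simp, simp add: algebra_simps add_divide_distrib)
    also have "\<dots> = (\<Sum>i<m. \<Sum>b = 0..<?N. ((M *\<^sub>v U i) $ a * ((M *\<^sub>v U i) $ b * x $ b) + (M *\<^sub>v V i) $ a * ((M *\<^sub>v V i) $ b * x $ b)) / ds i ^ 3)"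
      by (rule sum.swap)
    also have "\<dots> = (\<Sum>i<m. (((M *\<^sub>v U i) \<bullet> x) * (M *\<^sub>v U i) $ a + ((M *\<^sub>v V i) \<bullet> x) * (M *\<^sub>v V i) $ a) / ds i ^ 3)"
      using x by (intro sum.cong, simp, simp add: scalar_prod_def sum_divide_distrib[symmetric] sum.distrib sum_distrib_left algebra_simps)
    finally show ?thesis .
  qed
  have JVU: "?J *\<^sub>v V j = (1 / ds j) \<cdot>\<^sub>v (M *\<^sub>v U j)" if j: "j < m" for j
  proof -
    have "(1 / ds j) \<cdot>\<^sub>v (M *\<^sub>v U j) = ((1 / ds j) * ds j) \<cdot>\<^sub>v (?J *\<^sub>v V j)"
      unfolding MU[OF j] smult_smult_assoc ..
    also have "\<dots> = ?J *\<^sub>v V j" using dpos[OF j] by simp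
    finally show ?thesis by simp
  qed
  have JUV: "?J *\<^sub>v U j = (- 1 / ds j) \<cdot>\<^sub>v (M *\<^sub>v V j)" if j: "j < m" for j
  proof -
    have "(- 1 / ds j) \<cdot>\<^sub>v (M *\<^sub>v V j) = ((- 1 / ds j) * (- ds j)) \<cdot>\<^sub>v (?J *\<^sub>v U j)"
      unfolding MV[OF j] smult_smult_assoc ..
    also have "\<dots> = ?J *\<^sub>v U j" using dpos[OF j] by simp
    finally show ?thesis by simp
  qed
  have K0U: "K0 *\<^sub>v U j = (- 1 / ds j ^ 2) \<cdot>\<^sub>v (M *\<^sub>v U j)" if j: "j < m" for j
  proof -
    have "Mi *\<^sub>v (?J *\<^sub>v U j) = (- 1 / ds j) \<cdot>\<^sub>v V j"
      unfolding JUV[OF j] using Mic Mc Vc[OF j] MiMv[OF Vc[OF j]] by (simp add: mult_mat_vec[of _ ?N ?N])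
    then have "K0 *\<^sub>v U j = ?J *\<^sub>v ((- 1 / ds j) \<cdot>\<^sub>v V j)" unfolding K0v[OF Uc[OF j]] by simp
    also have "\<dots> = (- 1 / ds j) \<cdot>\<^sub>v (?J *\<^sub>v V j)" using Vc[OF j] by (simp add: mult_mat_vec[OF Jc])
    also have "\<dots> = (- 1 / ds j ^ 2) \<cdot>\<^sub>v (M *\<^sub>v U j)" unfolding JVU[OF j] smult_smult_assoc
      by (simp add: power2_eq_square)
    finally show ?thesis .
  qed
  have K0V: "K0 *\<^sub>v V j = (- 1 / ds j ^ 2) \<cdot>\<^sub>v (M *\<^sub>v V j)" if j: "j < m" for j
  proof -
    have "Mi *\<^sub>v (?J *\<^sub>v V j) = (1 / ds j) \<cdot>\<^sub>v U j"
      unfolding JVU[OF j] using Mic Mc Uc[OF j] MiMv[OF Uc[OF j]] by (simp add: mult_mat_vec[of _ ?N ?N])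
    then have "K0 *\<^sub>v V j = ?J *\<^sub>v ((1 / ds j) \<cdot>\<^sub>v U j)" unfolding K0v[OF Vc[OF j]] by simp
    also have "\<dots> = (1 / ds j) \<cdot>\<^sub>v (?J *\<^sub>v U j)" using Uc[OF j] by (simp add: mult_mat_vec[OF Jc])
    also have "\<dots> = (- 1 / ds j ^ 2) \<cdot>\<^sub>v (M *\<^sub>v V j)" unfolding JUV[OF j] smult_smult_assoc
      by (simp add: power2_eq_square)
    finally show ?thesis .
  qed
  have KU: "K *\<^sub>v U j = 0\<^sub>v ?N" if j: "j < m" for j
  proof (rule eq_vecI)
    fix a assume "a < dim_vec (0\<^sub>v ?N :: real vec)"
    then have a: "a < ?N" by simp
    have "(\<Sum>i<m. (((M *\<^sub>v U i) \<bullet> U j) * (M *\<^sub>v U i) $ a + ((M *\<^sub>v V i) \<bullet> U j) * (M *\<^sub>v V i) $ a) / ds i ^ 3)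
       = (\<Sum>i<m. if i = j then (M *\<^sub>v U j) $ a / ds j ^ 2 else 0)"
    proof (rule sum.cong)
      fix i assume "i \<in> {..<m}"
      then have i: "i < m" by simp
      show "(((M *\<^sub>v U i) \<bullet> U j) * (M *\<^sub>v U i) $ a + ((M *\<^sub>v V i) \<bullet> U j) * (M *\<^sub>v V i) $ a) / ds i ^ 3
         = (if i = j then (M *\<^sub>v U j) $ a / ds j ^ 2 else 0)"
        unfolding cUdot[OF i Uc[OF j]] cVdot[OF i Uc[OF j]] UU[OF j i] UV[OF j i]
        using dpos[OF i] by (auto simp: power2_eq_square power3_eq_cube)
    qed simp
    also have "\<dots> = (M *\<^sub>v U j) $ a / ds j ^ 2" using j by simp
    finally show "(K *\<^sub>v U j) $ a = 0\<^sub>v ?N $ a"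
      unfolding Kv[OF Uc[OF j] a] K0U[OF j] using a Mc by simp
  qed (simp add: K_def)
  have KV: "K *\<^sub>v V j = 0\<^sub>v ?N" if j: "j < m" for j
  proof (rule eq_vecI)
    fix a assume "a < dim_vec (0\<^sub>v ?N :: real vec)"
    then have a: "a < ?N" by simp
    have "(\<Sum>i<m. (((M *\<^sub>v U i) \<bullet> V j) * (M *\<^sub>v U i) $ a + ((M *\<^sub>v V i) \<bullet> V j) * (M *\<^sub>v V i) $ a) / ds i ^ 3)
       = (\<Sum>i<m. if i = j then (M *\<^sub>v V j) $ a / ds j ^ 2 else 0)"
    proof (rule sum.cong)
      fix i assume "i \<in> {..<m}"
      then have i: "i < m" by simp
      show "(((M *\<^sub>v U i) \<bullet> V j) * (M *\<^sub>v U i) $ a + ((M *\<^sub>v V i) \<bullet> V j) * (M *\<^sub>v V i) $ a) / ds i ^ 3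
         = (if i = j then (M *\<^sub>v V j) $ a / ds j ^ 2 else 0)"
        unfolding cUdot[OF i Vc[OF j]] cVdot[OF i Vc[OF j]] VV[OF j i] VU[OF j i]
        using dpos[OF i] by (auto simp: power2_eq_square power3_eq_cube)
    qed simp
    also have "\<dots> = (M *\<^sub>v V j) $ a / ds j ^ 2" using j by simp
    finally show "(K *\<^sub>v V j) $ a = 0\<^sub>v ?N $ a"
      unfolding Kv[OF Vc[OF j] a] K0V[OF j] using a Mc by simp
  qed (simp add: K_def)
  have KW: "K *\<^sub>v x = K0 *\<^sub>v x" if x: "x \<in> carrier_vec ?N"
    and xU: "\<And>i. i < m \<Longrightarrow> x \<bullet> (?J *\<^sub>v U i) = 0" and xV: "\<And>i. i < m \<Longrightarrow> x \<bullet> (?J *\<^sub>v V i) = 0" for x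
  proof (rule eq_vecI)
    fix a assume "a < dim_vec (K0 *\<^sub>v x)"
    then have a: "a < ?N" using K0c by simp
    show "(K *\<^sub>v x) $ a = (K0 *\<^sub>v x) $ a" unfolding Kv[OF x a]
      using cUdot[OF _ x] cVdot[OF _ x] xU xV by simp
  qed (insert K0c, simp add: K_def)
  (* a nonzero vector in the symplectic complement *)
  define C where "C = mat ?N ?N (\<lambda>(r,c). if r < m then (?J *\<^sub>v U r) $ c else if r < 2*m then (?J *\<^sub>v V (r-m)) $ c else 0)"
  have Cc: "C \<in> carrier_mat ?N ?N" unfolding C_def by simp
  have Nm: "2*m < ?N - 1 \<or> 2*m = ?N - 1 \<or> 2*m \<le> ?N - 1" using mn by arith
  have e: "unit_vec ?N (?N - 1) \<in> carrier_vec ?N" "unit_vec ?N (?N - 1) \<noteq> (0\<^sub>v ?N :: real vec)"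
    using mn by auto
  have "transpose_mat C *\<^sub>v unit_vec ?N (?N - 1) = 0\<^sub>v ?N"
  proof (rule eq_vecI)
    fix c assume "c < dim_vec (0\<^sub>v ?N :: real vec)"
    then have c: "c < ?N" by simp
    have "\<not> (?N - 1 < 2*m)" using mn by arith
    then show "(transpose_mat C *\<^sub>v unit_vec ?N (?N - 1)) $ c = 0\<^sub>v ?N $ c"
      using c mn unfolding C_def by simp
  qed (simp add: C_def)
  moreover have Ct: "transpose_mat C \<in> carrier_mat ?N ?N" using Cc by simp
  ultimately have "det (transpose_mat C) = 0"
    using det_0_iff_vec_prod_zero_field[OF Ct] e by blast
  then have "det C = 0" using det_transpose[OF Cc] by simp
  then obtain w where w: "w \<in> carrier_vec ?N" "w \<noteq> 0\<^sub>v ?N" "C *\<^sub>v w = 0\<^sub>v ?N"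
    using det_0_iff_vec_prod_zero_field[OF Cc] by blast
  have wU: "w \<bullet> (?J *\<^sub>v U i) = 0" if i: "i < m" for i
  proof -
    have "row C i = ?J *\<^sub>v U i" unfolding C_def using i mn Uc[OF i] by (intro eq_vecI, auto)
    moreover have "(C *\<^sub>v w) $ i = 0" using w(3) i mn by simp
    ultimately have "(?J *\<^sub>v U i) \<bullet> w = 0" using i mn Cc by simp
    then show ?thesis using comm_scalar_prod[of w ?N "?J *\<^sub>v U i"] w Uc[OF i] by simp
  qed
  have wV: "w \<bullet> (?J *\<^sub>v V i) = 0" if i: "i < m" for i
  proof -
    have "row C (m + i) = ?J *\<^sub>v V i" unfolding C_def using i mn Vc[OF i] by (intro eq_vecI, auto)
    moreover have "(C *\<^sub>v w) $ (m + i) = 0" using w(3) i mn by simp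
    ultimately have "(?J *\<^sub>v V i) \<bullet> w = 0" using i mn Cc by simp
    then show ?thesis using comm_scalar_prod[of w ?N "?J *\<^sub>v V i"] w Vc[OF i] by simp
  qed
  define E where "E = Mi * K"
  have Ec: "E \<in> carrier_mat ?N ?N" unfolding E_def using Mic Kc by simp
  have ME: "M * E = K" unfolding E_def using Mc Mic Kc MMi
    by (simp add: assoc_mult_mat[symmetric, of _ ?N ?N _ ?N _ ?N])
  have Ev: "E *\<^sub>v x = Mi *\<^sub>v (K *\<^sub>v x)" if "x \<in> carrier_vec ?N" for x
    unfolding E_def using that Mic Kc by simp
  have Ew: "E *\<^sub>v w \<noteq> 0\<^sub>v ?N"
  proof
    assume h: "E *\<^sub>v w = 0\<^sub>v ?N"
    have Jw: "?J *\<^sub>v w \<in> carrier_vec ?N" using w by simp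
    have MJw: "Mi *\<^sub>v (?J *\<^sub>v w) \<in> carrier_vec ?N" using Mic w by simp
    have JMJw: "?J *\<^sub>v (Mi *\<^sub>v (?J *\<^sub>v w)) \<in> carrier_vec ?N" using Mic w by simp
    have "Mi *\<^sub>v (?J *\<^sub>v (Mi *\<^sub>v (?J *\<^sub>v w))) = 0\<^sub>v ?N"
      using h Ev[OF w(1)] KW[OF w(1) wU wV] K0v[OF w(1)] by simp
    then have "?J *\<^sub>v (Mi *\<^sub>v (?J *\<^sub>v w)) = 0\<^sub>v ?N"
      using MMiv[OF JMJw] Mc by simp
    then have "?J *\<^sub>v (?J *\<^sub>v (Mi *\<^sub>v (?J *\<^sub>v w))) = 0\<^sub>v ?N" by simp
    then have "Mi *\<^sub>v (?J *\<^sub>v w) = 0\<^sub>v ?N" unfolding JJ_vec[OF MJw]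
      using MJw by (metis uminus_uminus_vec uminus_zero_vec)
    then have "?J *\<^sub>v w = 0\<^sub>v ?N" using MMiv[OF Jw] Mc by simp
    then have "?J *\<^sub>v (?J *\<^sub>v w) = 0\<^sub>v ?N" by simp
    then have "w = 0\<^sub>v ?N" unfolding JJ_vec[OF w(1)] by (metis uminus_uminus_vec uminus_zero_vec)
    with w(2) show False by simp
  qed
  have Et: "transpose_mat (M * E) = M * E" unfolding ME by (rule Kt)
  obtain l z where lz: "l \<noteq> 0" "z \<in> carrier_vec ?N" "z \<noteq> 0\<^sub>v ?N" "E *\<^sub>v z = l \<cdot>\<^sub>v z"
    using real_eig_nonzero[OF Ec M Et w(1) Ew] by blast
  have Kz: "K *\<^sub>v z = l \<cdot>\<^sub>v (M *\<^sub>v z)"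
  proof -
    have "K *\<^sub>v z = M *\<^sub>v (E *\<^sub>v z)" unfolding ME[symmetric] using Mc Ec lz(2) by simp
    also have "\<dots> = l \<cdot>\<^sub>v (M *\<^sub>v z)" unfolding lz(4) using Mc lz(2) by (simp add: mult_mat_vec)
    finally show ?thesis .
  qed
  have zM: "x \<bullet> (K *\<^sub>v z) = l * (z \<bullet> (M *\<^sub>v x))" if x: "x \<in> carrier_vec ?N" for x
    unfolding Kz using x lz(2) Mc Msym[OF x lz(2)] by simp
  have zU: "z \<bullet> (?J *\<^sub>v U i) = 0" if i: "i < m" for i
  proof -
    have "0 = z \<bullet> (K *\<^sub>v V i)" using KV[OF i] lz(2) by simp
    also have "\<dots> = V i \<bullet> (K *\<^sub>v z)" by (rule sym_sprod[OF Kc Kt lz(2) Vc[OF i]])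
    also have "\<dots> = l * (- ds i * (z \<bullet> (?J *\<^sub>v U i)))" unfolding zM[OF Vc[OF i]] MV[OF i]
      using lz(2) Uc[OF i] by simp
    finally show ?thesis using lz(1) dpos[OF i] by simp
  qed
  have zV: "z \<bullet> (?J *\<^sub>v V i) = 0" if i: "i < m" for i
  proof -
    have "0 = z \<bullet> (K *\<^sub>v U i)" using KU[OF i] lz(2) by simp
    also have "\<dots> = U i \<bullet> (K *\<^sub>v z)" by (rule sym_sprod[OF Kc Kt lz(2) Uc[OF i]])
    also have "\<dots> = l * (ds i * (z \<bullet> (?J *\<^sub>v V i)))" unfolding zM[OF Uc[OF i]] MU[OF i]
      using lz(2) Vc[OF i] by simp
    finally show ?thesis using lz(1) dpos[OF i] by simp
  qed
  define y where "y = Mi *\<^sub>v (?J *\<^sub>v z)"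
  have yc: "y \<in> carrier_vec ?N" unfolding y_def using Mic lz(2) by simp
  have My: "M *\<^sub>v y = ?J *\<^sub>v z" unfolding y_def using MMiv lz(2) by simp
  have Jy: "?J *\<^sub>v y = l \<cdot>\<^sub>v (M *\<^sub>v z)" unfolding y_def
    using Kz KW[OF lz(2) zU zV] K0v[OF lz(2)] by simp
  define q where "q = z \<bullet> (M *\<^sub>v z)"
  have q: "q > 0" unfolding q_def using spd_pos[OF M lz(2,3)] .
  have yne: "y \<noteq> 0\<^sub>v ?N"
  proof
    assume "y = 0\<^sub>v ?N"
    then have "?J *\<^sub>v z = 0\<^sub>v ?N" using My Mc by simp
    then have "?J *\<^sub>v (?J *\<^sub>v z) = 0\<^sub>v ?N" by simp
    then have "z = 0\<^sub>v ?N" unfolding JJ_vec[OF lz(2)] by (metis uminus_uminus_vec uminus_zero_vec)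
    with lz(3) show False by simp
  qed
  define r where "r = y \<bullet> (M *\<^sub>v y)"
  have r: "r > 0" unfolding r_def using spd_pos[OF M yc yne] .
  have zJy1: "z \<bullet> (?J *\<^sub>v y) = l * q" unfolding Jy q_def using lz(2) Mc by simp
  have zJy2: "z \<bullet> (?J *\<^sub>v y) = - r" unfolding omega_antisym[OF lz(2) yc] r_def My ..
  have lq: "l * q = - r" using zJy1 zJy2 by simp
  define s where "s = - l"
  have s: "s > 0" unfolding s_def using lq q r by (smt (verit) mult_nonneg_nonneg)
  define d where "d = 1 / sqrt s"
  have d: "d > 0" unfolding d_def using s by simp
  have dd: "d * d * s = 1" unfolding d_def using s by (simp add: field_simps)
  define \<alpha> where "\<alpha> = 1 / sqrt (d * s * q)"
  have dsq: "d * s * q > 0" using d s q by simp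
  have aa: "\<alpha> * \<alpha> * (d * s * q) = 1" unfolding \<alpha>_def using dsq d s q by (simp add: field_simps)
  define \<beta> where "\<beta> = - d * \<alpha>"
  define u where "u = \<alpha> \<cdot>\<^sub>v z"
  define v where "v = \<beta> \<cdot>\<^sub>v y"
  have uc: "u \<in> carrier_vec ?N" unfolding u_def using lz(2) by simp
  have vc: "v \<in> carrier_vec ?N" unfolding v_def using yc by simp
  have Ju: "?J *\<^sub>v u = \<alpha> \<cdot>\<^sub>v (?J *\<^sub>v z)" unfolding u_def using lz(2) by (simp add: mult_mat_vec[OF Jc])
  have Jv: "?J *\<^sub>v v = (\<beta> * l) \<cdot>\<^sub>v (M *\<^sub>v z)" unfolding v_def using yc
    by (simp add: mult_mat_vec[OF Jc] Jy smult_smult_assoc)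
  have Mu: "M *\<^sub>v u = d \<cdot>\<^sub>v (?J *\<^sub>v v)"
  proof -
    have "d * (\<beta> * l) = \<alpha>" unfolding \<beta>_def using dd unfolding s_def by (simp add: algebra_simps)
    then show ?thesis unfolding Jv u_def smult_smult_assoc using lz(2) Mc by (simp add: mult_mat_vec)
  qed
  have Mv: "M *\<^sub>v v = (- d) \<cdot>\<^sub>v (?J *\<^sub>v u)"
    unfolding Ju v_def smult_smult_assoc using yc Mc by (simp add: mult_mat_vec My \<beta>_def)
  have uJv: "u \<bullet> (?J *\<^sub>v v) = 1"
  proof -
    have "u \<bullet> (?J *\<^sub>v v) = \<alpha> * ((\<beta> * l) * q)" unfolding Jv u_def q_def using lz(2) Mc by simp
    also have "\<dots> = \<alpha> * \<alpha> * (d * s * q)" unfolding \<beta>_def s_def by (simp add: algebra_simps)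
    finally show ?thesis using aa by simp
  qed
  have yU: "y \<bullet> (?J *\<^sub>v U i) = 0" if i: "i < m" for i
  proof -
    have "y \<bullet> (M *\<^sub>v V i) = V i \<bullet> (M *\<^sub>v y)" by (rule Msym[OF yc Vc[OF i]])
    also have "\<dots> = - (z \<bullet> (?J *\<^sub>v V i))" unfolding My by (rule omega_antisym[OF Vc[OF i] lz(2)])
    also have "\<dots> = 0" using zV[OF i] by simp
    finally have "y \<bullet> (M *\<^sub>v V i) = 0" .
    then show ?thesis unfolding MV[OF i] using yc Uc[OF i] dpos[OF i] by simp
  qed
  have yV: "y \<bullet> (?J *\<^sub>v V i) = 0" if i: "i < m" for i
  proof -
    have "y \<bullet> (M *\<^sub>v U i) = U i \<bullet> (M *\<^sub>v y)" by (rule Msym[OF yc Uc[OF i]])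
    also have "\<dots> = - (z \<bullet> (?J *\<^sub>v U i))" unfolding My by (rule omega_antisym[OF Uc[OF i] lz(2)])
    also have "\<dots> = 0" using zU[OF i] by simp
    finally have "y \<bullet> (M *\<^sub>v U i) = 0" .
    then show ?thesis unfolding MU[OF i] using yc Vc[OF i] dpos[OF i] by simp
  qed
  have uU: "u \<bullet> (?J *\<^sub>v U i) = 0" if i: "i < m" for i
    unfolding u_def using zU[OF i] lz(2) Uc[OF i] by simp
  have uV: "u \<bullet> (?J *\<^sub>v V i) = 0" if i: "i < m" for i
    unfolding u_def using zV[OF i] lz(2) Vc[OF i] by simp
  have vU: "v \<bullet> (?J *\<^sub>v U i) = 0" if i: "i < m" for i
    unfolding v_def using yU[OF i] yc Uc[OF i] by simp
  have vV: "v \<bullet> (?J *\<^sub>v V i) = 0" if i: "i < m" for i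
    unfolding v_def using yV[OF i] yc Vc[OF i] by simp
  have Uu: "U i \<bullet> (?J *\<^sub>v u) = 0" if i: "i < m" for i
    using omega_antisym[OF Uc[OF i] uc] uU[OF i] by simp
  have Uv: "U i \<bullet> (?J *\<^sub>v v) = 0" if i: "i < m" for i
    using omega_antisym[OF Uc[OF i] vc] vU[OF i] by simp
  have Vv: "V i \<bullet> (?J *\<^sub>v v) = 0" if i: "i < m" for i
    using omega_antisym[OF Vc[OF i] vc] vV[OF i] by simp
  have uu: "u \<bullet> (?J *\<^sub>v u) = 0" by (rule omega_self[OF uc])
  have vv: "v \<bullet> (?J *\<^sub>v v) = 0" by (rule omega_self[OF vc])
  have "fam n M (Suc m) (U(m:=u)) (V(m:=v)) (ds(m:=d))"
    unfolding fam_def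
  proof (rule conjI; intro allI impI)
    fix i assume "i < Suc m"
    then have "i < m \<or> i = m" by auto
    then show "(U(m := u)) i \<in> carrier_vec ?N \<and> (V(m := v)) i \<in> carrier_vec ?N \<and> 0 < (ds(m := d)) i \<and>
       M *\<^sub>v (U(m := u)) i = (ds(m := d)) i \<cdot>\<^sub>v (?J *\<^sub>v (V(m := v)) i) \<and>
       M *\<^sub>v (V(m := v)) i = - (ds(m := d)) i \<cdot>\<^sub>v (?J *\<^sub>v (U(m := u)) i)"
      using Uc Vc dpos MU MV uc vc d Mu Mv by auto
  next
    fix i j assume "i < Suc m" "j < Suc m"
    then have "i < m \<or> i = m" "j < m \<or> j = m" by auto
    then show "(U(m := u)) i \<bullet> (?J *\<^sub>v (U(m := u)) j) = 0 \<and>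
       (V(m := v)) i \<bullet> (?J *\<^sub>v (V(m := v)) j) = 0 \<and>
       (U(m := u)) i \<bullet> (?J *\<^sub>v (V(m := v)) j) = (if i = j then 1 else 0)"
      using UU VV UV uU vV uV Uu Vv Uv uu vv uJv by auto
  qed
  then show ?thesis by blast
qed

lemma fam_extend:
  assumes M: "sym_pos_def (2*n) M"
  shows "fam n M m U V ds \<Longrightarrow> m \<le> n \<Longrightarrow> \<exists>U' V' ds'. fam n M n U' V' ds' \<and> (\<forall>i<m. ds' i = ds i)"
proof (induct "n - m" arbitrary: m U V ds)
  case 0
  then have "m = n" by simp
  then show ?case using 0 by blast
next
  case (Suc k)
  then have mn: "m < n" by simp
  obtain u v d where F: "fam n M (Suc m) (U(m:=u)) (V(m:=v)) (ds(m:=d))"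
    using fam_step[OF M Suc(3) mn] by blast
  have "k = n - Suc m" using Suc(2) by simp
  from Suc(1)[OF this F] mn obtain U' V' ds' where
    F': "fam n M n U' V' ds'" and E: "\<forall>i<Suc m. ds' i = (ds(m := d)) i" by auto
  have "\<forall>i<m. ds' i = ds i"
  proof (intro allI impI)
    fix i assume "i < m"
    then show "ds' i = ds i" using E[rule_format, of i] by auto
  qed
  then show ?case using F' by blast
qed

lemma symp_eig_from_pair:
  assumes M: "sym_pos_def (2*n) M" and n: "0 < n"
    and u: "u \<in> carrier_vec (2*n)" and v: "v \<in> carrier_vec (2*n)" and d: "d > 0"
    and Mu: "M *\<^sub>v u = d \<cdot>\<^sub>v (Jmat n *\<^sub>v v)" and Mv: "M *\<^sub>v v = (- d) \<cdot>\<^sub>v (Jmat n *\<^sub>v u)"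
    and uv: "u \<bullet> (Jmat n *\<^sub>v v) = 1"
  shows "symp_eigenvalue n M d"
proof -
  have F: "fam n M 1 (\<lambda>_. u) (\<lambda>_. v) (\<lambda>_. d)"
    unfolding fam_def using u v d Mu Mv uv omega_self[OF u] omega_self[OF v] by auto
  obtain U' V' ds' where F': "fam n M n U' V' ds'" and ds: "ds' 0 = d"
    using fam_extend[OF M F] n by force
  have W: "williamson n M (mat (2*n) (2*n) (\<lambda>(a,b). if b < n then U' b $ a else V' (b-n) $ a)) (mat_diag n ds')"
    by (rule fam_williamson[OF M F'])
  have "mat_diag n ds' $$ (0,0) = d" using n ds by (simp add: mat_diag_def)
  then show ?thesis unfolding symp_eigenvalue_def using W n by metis
qed

lemma nu_pos: assumes "0 < (\<nu> :: nat \<Rightarrow> real) 0" "\<And>i. Suc i < k \<Longrightarrow> \<nu> i < \<nu> (Suc i)"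
  shows "i < k \<Longrightarrow> 0 < \<nu> i"
proof (induct i)
  case 0 then show ?case using assms(1) by simp
next
  case (Suc i) then show ?case using assms(2)[of i] by force
qed

lemma nu_mono: assumes "\<And>i. Suc i < k \<Longrightarrow> (\<nu> :: nat \<Rightarrow> real) i < \<nu> (Suc i)"
  shows "i < j \<Longrightarrow> j < k \<Longrightarrow> \<nu> i < \<nu> j"
proof (induct j)
  case 0 then show ?case by simp
next
  case (Suc j)
  show ?case
  proof (cases "i = j")
    case True then show ?thesis using assms[of j] Suc by simp
  next
    case False then have "i < j" using Suc by simp
    then have "\<nu> i < \<nu> j" using Suc by simp
    then show ?thesis using assms[of j] Suc by simp
  qed
qed

lemma diag2_md: "diag2 (mat_diag k \<nu>) = mat_diag (2*k) (\<lambda>i. if i < k then \<nu> i else \<nu> (i - k))"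
  by (rule eq_matI, auto simp: diag2_def mat_diag_def)

lemma skew2_carrier: "D \<in> carrier_mat k k \<Longrightarrow> skew2 D \<in> carrier_mat (2*k) (2*k)"
  unfolding skew2_def carrier_mat_def by auto

lemma skew2_index: "D \<in> carrier_mat k k \<Longrightarrow> a < 2*k \<Longrightarrow> b < 2*k \<Longrightarrow> skew2 D $$ (a,b) =
  (if a < k then (if b < k then 0 else - D $$ (a, b-k)) else (if b < k then D $$ (a-k, b) else 0))"
  unfolding skew2_def by (subst index_mat_four_block, auto)

lemma two_eq: fixes p q x y :: real
  assumes "p * y = - q * x" "- q * y = p * x" "0 < x" "0 < y" "x \<noteq> y"
  shows "p = 0"
proof -
  have "p * y * y = - q * x * y" using assms(1) by simp
  also have "\<dots> = p * x * x" using assms(2) by (metis mult.commute mult.assoc)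
  finally have "p * (y * y - x * x) = 0" by (simp add: algebra_simps)
  moreover have "y * y \<noteq> x * x"
  proof
    assume "y * y = x * x"
    then have "(y - x) * (y + x) = 0" by (simp add: algebra_simps)
    moreover have "y + x > 0" using assms(3,4) by simp
    ultimately have "y - x = 0" by simp
    then show False using assms(5) by simp
  qed
  ultimately show ?thesis by simp
qed

lemma two_eq2: fixes a b x y :: real
  assumes "a * y = b * x" "a * x = b * y" "0 < x" "0 < y" "x \<noteq> y"
  shows "a = 0 \<and> b = 0"
proof -
  have "a * y * y = b * x * y" using assms(1) by simp
  also have "\<dots> = a * x * x" using assms(2) by (metis mult.commute mult.assoc)
  finally have "a * (y * y - x * x) = 0" by (simp add: algebra_simps)
  moreover have "y * y \<noteq> x * x"
  proof
    assume "y * y = x * x"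
    then have "(y - x) * (y + x) = 0" by (simp add: algebra_simps)
    moreover have "y + x > 0" using assms(3,4) by simp
    ultimately have "y - x = 0" by simp
    then show False using assms(5) by simp
  qed
  ultimately have "a = 0" by simp
  then show ?thesis using assms(1,3) by simp
qed

lemma mult_index_sum: assumes A: "A \<in> carrier_mat nr nc" and B: "B \<in> carrier_mat nc ncb"
  and i: "i < nr" and j: "j < ncb"
  shows "(A * B) $$ (i,j) = (\<Sum>c = 0..<nc. A $$ (i,c) * B $$ (c,j))"
  using A B i j by (simp add: scalar_prod_def)

lemma JX_index: assumes X: "X \<in> carrier_mat (2*n) kk" and r: "r < 2*n" and c: "c < kk"
  shows "(Jmat n * X) $$ (r,c) = (Jmat n *\<^sub>v col X c) $ r"
  using X r c by simp

theorem theorem3p4: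
  fixes n k :: nat and M X :: "real mat" and \<nu> :: "nat \<Rightarrow> real"
  assumes M: "sym_pos_def (2*n) M"
    and k: "1 \<le> k" "k \<le> n"
    and \<nu>pos: "0 < \<nu> 0"
    and \<nu>inc: "\<And>i. Suc i < k \<Longrightarrow> \<nu> i < \<nu> (Suc i)"
    and X: "X \<in> carrier_mat (2*n) (2*k)"
  shows "((transpose_mat X * Jmat n * X = Jmat k \<and>
           (\<exists>L. L \<in> carrier_mat (2*k) (2*k) \<and> transpose_mat L = - L \<and>
                M * X * diag2 (mat_diag k \<nu>) = Jmat n * X * L))
        \<longleftrightarrow>
         (transpose_mat X * Jmat n * X = Jmat k \<and>
          (\<exists>\<Delta>. \<Delta> \<in> carrier_mat k k \<and> diagonal_mat \<Delta> \<and>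
                (\<forall>j<k. symp_eigenvalue n M (\<Delta> $$ (j,j))) \<and>
                M * X = Jmat n * X * skew2 \<Delta>)))"
proof -
  let ?J = "Jmat n"
  let ?f = "\<lambda>i. if i < k then \<nu> i else \<nu> (i - k)"
  let ?Nt = "diag2 (mat_diag k \<nu>)"
  have Nt: "?Nt = mat_diag (2*k) ?f" by (rule diag2_md)
  have npos: "\<And>i. i < k \<Longrightarrow> 0 < \<nu> i" using nu_pos[OF \<nu>pos \<nu>inc] .
  have fpos: "0 < ?f i" if "i < 2*k" for i
  proof -
    have "\<not> i < k \<Longrightarrow> i - k < k" using that by arith
    then show ?thesis using npos by auto
  qed
  have Mc: "M \<in> carrier_mat (2*n) (2*n)" and Mt: "transpose_mat M = M" using M unfolding sym_pos_def_def by auto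
  have Ntc: "?Nt \<in> carrier_mat (2*k) (2*k)" unfolding Nt by simp
  have JXc: "?J * X \<in> carrier_mat (2*n) (2*k)" by (rule mult_carrier_mat[OF Jc X])
  have MXc: "M * X \<in> carrier_mat (2*n) (2*k)" by (rule mult_carrier_mat[OF Mc X])
  have XTc: "transpose_mat X \<in> carrier_mat (2*k) (2*n)" using X by simp
  have colX: "col X c \<in> carrier_vec (2*n)" for c using col_dim[of X c] carrier_matD(1)[OF X] by simp
  show ?thesis
  proof
    assume "transpose_mat X * ?J * X = Jmat k \<and>
           (\<exists>L. L \<in> carrier_mat (2*k) (2*k) \<and> transpose_mat L = - L \<and> M * X * ?Nt = ?J * X * L)"
    then obtain L where XJX: "transpose_mat X * ?J * X = Jmat k" and Lc: "L \<in> carrier_mat (2*k) (2*k)"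
      and Lt: "transpose_mat L = - L" and eqL: "M * X * ?Nt = ?J * X * L" by blast
    define A where "A = transpose_mat X * M * X"
    have Ac: "A \<in> carrier_mat (2*k) (2*k)" unfolding A_def using X Mc by simp
    have Aidx: "A $$ (a,b) = col X a \<bullet> (M *\<^sub>v col X b)" if "a < 2*k" "b < 2*k" for a b
      unfolding A_def by (rule tAB[OF X Mc that])
    have Asym: "A $$ (a,b) = A $$ (b,a)" if "a < 2*k" "b < 2*k" for a b
      unfolding Aidx[OF that] Aidx[OF that(2,1)] by (rule sym_sprod[OF Mc Mt colX colX])
    have ANt: "A * ?Nt = Jmat k * L"
    proof -
      have XNt: "X * ?Nt \<in> carrier_mat (2*n) (2*k)" using X Ntc by simp
      have XL: "X * L \<in> carrier_mat (2*n) (2*k)" using X Lc by simp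
      have XTM: "transpose_mat X * M \<in> carrier_mat (2*k) (2*n)" using XTc Mc by simp
      have XTJ: "transpose_mat X * ?J \<in> carrier_mat (2*k) (2*n)" using XTc by simp
      have "A * ?Nt = (transpose_mat X * M) * (X * ?Nt)"
        unfolding A_def by (rule assoc_mult_mat[OF XTM X Ntc])
      also have "\<dots> = transpose_mat X * (M * (X * ?Nt))" by (rule assoc_mult_mat[OF XTc Mc XNt])
      also have "M * (X * ?Nt) = M * X * ?Nt" by (rule assoc_mult_mat[OF Mc X Ntc, symmetric])
      also have "\<dots> = ?J * X * L" by (rule eqL)
      also have "\<dots> = ?J * (X * L)" by (rule assoc_mult_mat[OF Jc X Lc])
      also have "transpose_mat X * (?J * (X * L)) = (transpose_mat X * ?J) * (X * L)"
        by (rule assoc_mult_mat[OF XTc Jc XL, symmetric])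
      also have "\<dots> = (transpose_mat X * ?J * X) * L" by (rule assoc_mult_mat[OF XTJ X Lc, symmetric])
      also have "\<dots> = Jmat k * L" unfolding XJX ..
      finally show ?thesis .
    qed
    have rel: "A $$ (a,b) * ?f b = (if a < k then L $$ (a+k, b) else - L $$ (a-k, b))"
      if a: "a < 2*k" and b: "b < 2*k" for a b
    proof -
      have "(A * ?Nt) $$ (a,b) = A $$ (a,b) * ?f b"
        unfolding Nt mat_diag_mult_right[OF Ac] using a b by simp
      moreover have "(Jmat k * L) $$ (a,b) = (Jmat k *\<^sub>v col L b) $ a"
        using Lc a b by simp
      moreover have "(Jmat k *\<^sub>v col L b) $ a = (if a < k then L $$ (a+k, b) else - L $$ (a-k, b))"
      proof -
        have cL: "col L b \<in> carrier_vec (2*k)" by (rule col_carrier_vec[OF b Lc])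
        have "a - k < 2*k" using a by arith
        then show ?thesis unfolding J_mult_vec[OF cL a] using a b Lc by auto
      qed
      ultimately show ?thesis using ANt by simp
    qed
    have Lsk: "L $$ (a,b) = - L $$ (b,a)" if "a < 2*k" "b < 2*k" for a b
    proof -
      have "transpose_mat L $$ (b,a) = (- L) $$ (b,a)" using Lt by simp
      then show ?thesis using that Lc by simp
    qed
    have R1: "L $$ (i+k, b) = A $$ (i,b) * ?f b" if "i < k" "b < 2*k" for i b
      using rel[of i b] that by simp
    have R2: "L $$ (i, b) = - (A $$ (i+k,b) * ?f b)" if "i < k" "b < 2*k" for i b
      using rel[of "i+k" b] that by simp
    have fk: "?f (j + k) = \<nu> j" "?f j = \<nu> j" if "j < k" for j using that by auto
    have Aoff: "A $$ (i, j+k) = 0" if i: "i < k" and j: "j < k" for i j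
    proof -
      let ?p = "A $$ (i, j+k)" and ?q = "A $$ (j, i+k)"
      have e1: "?p * \<nu> j = - (?q * \<nu> i)"
        using Lsk[of "i+k" "j+k"] R1[of i "j+k"] R1[of j "i+k"] i j fk by simp
      have "A $$ (i+k, j) = ?q" using Asym[of "i+k" j] i j by simp
      moreover have "A $$ (j+k, i) = ?p" using Asym[of "j+k" i] i j by simp
      ultimately have e2: "- (?q * \<nu> j) = ?p * \<nu> i"
        using Lsk[of i j] R2[of i j] R2[of j i] i j fk by simp
      show ?thesis
      proof (cases "i = j")
        case True
        then show ?thesis using e1 npos[OF i] by simp
      next
        case False
        have "i < j \<or> j < i" using False by arith
        then have "\<nu> i \<noteq> \<nu> j" using nu_mono[where k=k and \<nu>=\<nu> and i=i and j=j, OF \<nu>inc] nu_mono[where k=k and \<nu>=\<nu> and i=j and j=i, OF \<nu>inc] i j by force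
        then show ?thesis using two_eq[of ?p "\<nu> j" ?q "\<nu> i"] e1 e2 npos i j by simp
      qed
    qed
    have Adiag: "A $$ (i,j) = 0 \<and> A $$ (i+k,j+k) = 0" if i: "i < k" and j: "j < k" and ij: "i \<noteq> j" for i j
    proof -
      let ?a = "A $$ (i,j)" and ?b = "A $$ (i+k, j+k)"
      have s1: "A $$ (j,i) = ?a" using Asym[of j i] i j by simp
      have s2: "A $$ (j+k,i+k) = ?b" using Asym[of "j+k" "i+k"] i j by simp
      have e1: "?a * \<nu> j = ?b * \<nu> i"
        using Lsk[of "i+k" j] R1[of i j] R2[of j "i+k"] s2 i j fk by simp
      have e2: "?a * \<nu> i = ?b * \<nu> j"
        using Lsk[of "j+k" i] R1[of j i] R2[of i "j+k"] s1 i j fk by simp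
      have "i < j \<or> j < i" using ij by arith
      then have "\<nu> i \<noteq> \<nu> j" using nu_mono[where k=k and \<nu>=\<nu> and i=i and j=j, OF \<nu>inc] nu_mono[where k=k and \<nu>=\<nu> and i=j and j=i, OF \<nu>inc] i j by force
      then show ?thesis using two_eq2[of ?a "\<nu> j" ?b "\<nu> i"] e1 e2 npos i j by simp
    qed
    have Asame: "A $$ (i+k,i+k) = A $$ (i,i)" if i: "i < k" for i
    proof -
      have "A $$ (i,i) * \<nu> i = A $$ (i+k,i+k) * \<nu> i"
        using Lsk[of "i+k" i] R1[of i i] R2[of i "i+k"] i fk by simp
      then show ?thesis using npos[OF i] by simp
    qed
    define \<Delta> where "\<Delta> = mat_diag k (\<lambda>i. A $$ (i,i))"
    have \<Delta>c: "\<Delta> \<in> carrier_mat k k" unfolding \<Delta>_def by simp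
    have \<Delta>d: "diagonal_mat \<Delta>" unfolding \<Delta>_def diagonal_mat_def mat_diag_def by simp
    have \<Delta>idx: "\<Delta> $$ (i,j) = (if i = j then A $$ (i,i) else 0)" if "i < k" "j < k" for i j
      unfolding \<Delta>_def mat_diag_def using that by simp
    have Lform: "L = skew2 \<Delta> * ?Nt"
    proof -
      have S: "skew2 \<Delta> * ?Nt = mat (2*k) (2*k) (\<lambda>(a,b). skew2 \<Delta> $$ (a,b) * ?f b)"
        unfolding Nt by (rule mat_diag_mult_right[OF skew2_carrier[OF \<Delta>c]])
      show ?thesis unfolding S
      proof (rule eq_matI)
        fix a b assume "a < dim_row (mat (2*k) (2*k) (\<lambda>(a,b). skew2 \<Delta> $$ (a,b) * ?f b))"
          "b < dim_col (mat (2*k) (2*k) (\<lambda>(a,b). skew2 \<Delta> $$ (a,b) * ?f b))"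
        then have a: "a < 2*k" and b: "b < 2*k" by auto
        show "L $$ (a,b) = mat (2*k) (2*k) (\<lambda>(a,b). skew2 \<Delta> $$ (a,b) * ?f b) $$ (a,b)"
        proof (cases "a < k")
          case True
          note ak = True
          show ?thesis
          proof (cases "b < k")
            case True
            then show ?thesis using R2[of a b] ak a b Aoff[of b a] Asym[of "a+k" b] skew2_index[OF \<Delta>c a b] by simp
          next
            case False
            then obtain j where j: "b = j + k" "j < k" using b by (intro that[of "b - k"]) arith+
            show ?thesis
            proof (cases "a = j")
              case True
              then show ?thesis using R2[of a b] ak a b j Asame[of a] skew2_index[OF \<Delta>c a b] \<Delta>idx[of a j] fk by simp
            next
              case False
              then show ?thesis using R2[of a b] ak a b j Adiag[of a j] skew2_index[OF \<Delta>c a b] \<Delta>idx[of a j] by simp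
            qed
          qed
        next
          case False
          then obtain i where i: "a = i + k" "i < k" using a by (intro that[of "a - k"]) arith+
          show ?thesis
          proof (cases "b < k")
            case True
            then show ?thesis using R1[of i b] i a b skew2_index[OF \<Delta>c a b] \<Delta>idx[of i b] Adiag[of i b] by (cases "i = b", auto)
          next
            case False
            then obtain j where j: "b = j + k" "j < k" using b by (intro that[of "b - k"]) arith+
            then show ?thesis using R1[of i b] i a b skew2_index[OF \<Delta>c a b] Aoff[of i j] by simp
          qed
        qed
      qed (insert Lc, auto)
    qed
    have Sc: "skew2 \<Delta> \<in> carrier_mat (2*k) (2*k)" by (rule skew2_carrier[OF \<Delta>c])
    let ?Nti = "mat_diag (2*k) (\<lambda>i. 1 / ?f i)"
    have Ntic: "?Nti \<in> carrier_mat (2*k) (2*k)" by simp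
    have NtNti: "?Nt * ?Nti = 1\<^sub>m (2*k)"
      unfolding Nt mat_diag_diag
    proof (rule eq_matI)
      fix i j assume "i < dim_row (1\<^sub>m (2*k) :: real mat)" "j < dim_col (1\<^sub>m (2*k) :: real mat)"
      then have i: "i < 2*k" and j: "j < 2*k" by auto
      show "mat_diag (2*k) (\<lambda>i. ?f i * (1 / ?f i)) $$ (i,j) = 1\<^sub>m (2*k) $$ (i,j)"
        using i j fpos[OF j] unfolding mat_diag_def by simp
    qed (auto simp: mat_diag_def)
    have JXSc: "?J * X * skew2 \<Delta> \<in> carrier_mat (2*n) (2*k)" using JXc Sc by simp
    have MXeq: "M * X = ?J * X * skew2 \<Delta>"
    proof -
      have "M * X = (M * X) * 1\<^sub>m (2*k)" by (rule right_mult_one_mat[OF MXc, symmetric])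
      also have "\<dots> = (M * X) * (?Nt * ?Nti)" unfolding NtNti ..
      also have "\<dots> = ((M * X) * ?Nt) * ?Nti" by (rule assoc_mult_mat[OF MXc Ntc Ntic, symmetric])
      also have "\<dots> = (?J * X * (skew2 \<Delta> * ?Nt)) * ?Nti" unfolding eqL Lform[symmetric] ..
      also have "?J * X * (skew2 \<Delta> * ?Nt) = (?J * X * skew2 \<Delta>) * ?Nt"
        by (rule assoc_mult_mat[OF JXc Sc Ntc, symmetric])
      also have "(?J * X * skew2 \<Delta> * ?Nt) * ?Nti = (?J * X * skew2 \<Delta>) * (?Nt * ?Nti)"
        by (rule assoc_mult_mat[OF JXSc Ntc Ntic])
      also have "\<dots> = ?J * X * skew2 \<Delta>" unfolding NtNti by (rule right_mult_one_mat[OF JXSc])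
      finally show ?thesis .
    qed
    have n0: "0 < n" using k by simp
    have eig: "symp_eigenvalue n M (\<Delta> $$ (j,j))" if j: "j < k" for j
    proof -
      let ?u = "col X j" and ?v = "col X (j+k)" and ?d = "A $$ (j,j)"
      have jk: "j < 2*k" "j + k < 2*k" using j by auto
      have uv: "?u \<bullet> (?J *\<^sub>v ?v) = 1"
        using tAB[OF X Jc jk] XJX J_index[OF jk] j by simp
      have une: "?u \<noteq> 0\<^sub>v (2*n)"
      proof
        assume "?u = 0\<^sub>v (2*n)"
        then have "?u \<bullet> (?J *\<^sub>v ?v) = 0" using colX[of "j+k"] by simp
        with uv show False by simp
      qed
      have d: "?d > 0" unfolding Aidx[OF jk(1) jk(1)] by (rule spd_pos[OF M colX une])
      have Mu: "M *\<^sub>v ?u = ?d \<cdot>\<^sub>v (?J *\<^sub>v ?v)"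
      proof (rule eq_vecI)
        fix r assume "r < dim_vec (?d \<cdot>\<^sub>v (?J *\<^sub>v ?v))"
        then have r: "r < 2*n" using X by simp
        have "(M *\<^sub>v ?u) $ r = (M * X) $$ (r,j)" using r Mc X jk by simp
        also have "\<dots> = (\<Sum>c = 0..<2*k. (?J * X) $$ (r,c) * skew2 \<Delta> $$ (c,j))"
          unfolding MXeq by (rule mult_index_sum[OF JXc Sc r jk(1)])
        also have "\<dots> = (\<Sum>c = 0..<2*k. if c = j + k then (?J * X) $$ (r,j+k) * ?d else 0)"
        proof (rule sum.cong)
          fix c assume "c \<in> {0..<2*k}"
          then have c: "c < 2*k" by simp
          have "\<not> c < k \<Longrightarrow> c - k < k" using c by arith
          moreover have "\<not> c < k \<Longrightarrow> c = j + k \<longleftrightarrow> c - k = j" by arith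
          ultimately show "(?J * X) $$ (r,c) * skew2 \<Delta> $$ (c,j) = (if c = j + k then (?J * X) $$ (r,j+k) * ?d else 0)"
            using skew2_index[OF \<Delta>c c jk(1)] \<Delta>idx[of "c - k" j] j by auto
        qed simp
        also have "\<dots> = (?J * X) $$ (r,j+k) * ?d" using jk by simp
        also have "\<dots> = (?d \<cdot>\<^sub>v (?J *\<^sub>v ?v)) $ r" using JX_index[OF X r jk(2)] r by simp
        finally show "(M *\<^sub>v ?u) $ r = (?d \<cdot>\<^sub>v (?J *\<^sub>v ?v)) $ r" .
      qed (insert X Mc, simp)
      have Mv: "M *\<^sub>v ?v = (- ?d) \<cdot>\<^sub>v (?J *\<^sub>v ?u)"
      proof (rule eq_vecI)
        fix r assume "r < dim_vec ((- ?d) \<cdot>\<^sub>v (?J *\<^sub>v ?u))"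
        then have r: "r < 2*n" using X by simp
        have "(M *\<^sub>v ?v) $ r = (M * X) $$ (r,j+k)" using r Mc X jk by simp
        also have "\<dots> = (\<Sum>c = 0..<2*k. (?J * X) $$ (r,c) * skew2 \<Delta> $$ (c,j+k))"
          unfolding MXeq by (rule mult_index_sum[OF JXc Sc r jk(2)])
        also have "\<dots> = (\<Sum>c = 0..<2*k. if c = j then (?J * X) $$ (r,j) * (- ?d) else 0)"
        proof (rule sum.cong)
          fix c assume "c \<in> {0..<2*k}"
          then have c: "c < 2*k" by simp
          show "(?J * X) $$ (r,c) * skew2 \<Delta> $$ (c,j+k) = (if c = j then (?J * X) $$ (r,j) * (- ?d) else 0)"
            using skew2_index[OF \<Delta>c c jk(2)] \<Delta>idx[of c j] j by auto
        qed simp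
        also have "\<dots> = (?J * X) $$ (r,j) * (- ?d)" using jk by simp
        also have "\<dots> = ((- ?d) \<cdot>\<^sub>v (?J *\<^sub>v ?u)) $ r" using JX_index[OF X r jk(1)] r by simp
        finally show "(M *\<^sub>v ?v) $ r = ((- ?d) \<cdot>\<^sub>v (?J *\<^sub>v ?u)) $ r" .
      qed (insert X Mc, simp)
      have "symp_eigenvalue n M ?d" by (rule symp_eig_from_pair[OF M n0 colX colX d Mu Mv uv])
      then show ?thesis using \<Delta>idx[of j j] j by simp
    qed
    show "transpose_mat X * ?J * X = Jmat k \<and>
          (\<exists>\<Delta>. \<Delta> \<in> carrier_mat k k \<and> diagonal_mat \<Delta> \<and>
                (\<forall>j<k. symp_eigenvalue n M (\<Delta> $$ (j,j))) \<and> M * X = ?J * X * skew2 \<Delta>)"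
      using XJX \<Delta>c \<Delta>d eig MXeq by blast
  next
    assume "transpose_mat X * ?J * X = Jmat k \<and>
          (\<exists>\<Delta>. \<Delta> \<in> carrier_mat k k \<and> diagonal_mat \<Delta> \<and>
                (\<forall>j<k. symp_eigenvalue n M (\<Delta> $$ (j,j))) \<and> M * X = ?J * X * skew2 \<Delta>)"
    then obtain \<Delta> where XJX: "transpose_mat X * ?J * X = Jmat k" and \<Delta>c: "\<Delta> \<in> carrier_mat k k"
      and \<Delta>d: "diagonal_mat \<Delta>" and eq: "M * X = ?J * X * skew2 \<Delta>" by blast
    have dg: "\<Delta> $$ (i,j) = 0" if "i < k" "j < k" "i \<noteq> j" for i j
      using \<Delta>d \<Delta>c that unfolding diagonal_mat_def by auto
    have Sc: "skew2 \<Delta> \<in> carrier_mat (2*k) (2*k)" by (rule skew2_carrier[OF \<Delta>c])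
    define L where "L = skew2 \<Delta> * ?Nt"
    have LL: "L = mat (2*k) (2*k) (\<lambda>(a,b). skew2 \<Delta> $$ (a,b) * ?f b)"
      unfolding L_def Nt by (rule mat_diag_mult_right[OF Sc])
    have Lc: "L \<in> carrier_mat (2*k) (2*k)" unfolding LL by simp
    have Lt: "transpose_mat L = - L"
    proof (rule eq_matI)
      fix a b assume "a < dim_row (- L)" "b < dim_col (- L)"
      then have a: "a < 2*k" and b: "b < 2*k" using Lc by auto
      have tl: "transpose_mat L $$ (a,b) = skew2 \<Delta> $$ (b,a) * ?f a" unfolding LL using a b by simp
      have ml: "(- L) $$ (a,b) = - (skew2 \<Delta> $$ (a,b) * ?f b)" unfolding LL using a b by simp
      show "transpose_mat L $$ (a,b) = (- L) $$ (a,b)"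
        unfolding tl ml skew2_index[OF \<Delta>c a b] skew2_index[OF \<Delta>c b a]
      proof (cases "a < k")
        case ak: True
        show "(if b < k then if a < k then 0 else - \<Delta> $$ (b, a - k) else if a < k then \<Delta> $$ (b - k, a) else 0) * ?f a =
          - ((if a < k then if b < k then 0 else - \<Delta> $$ (a, b - k) else if b < k then \<Delta> $$ (a - k, b) else 0) * ?f b)"
        proof (cases "b < k")
          case True then show ?thesis using ak by simp
        next
          case bk: False
          define j where "j = b - k"
          have j: "j < k" "b = j + k" unfolding j_def using b bk by arith+
          show ?thesis
          proof (cases "a = j")
            case True then show ?thesis using ak bk j by simp
          next
            case False then show ?thesis using ak bk j dg[of j a] dg[of a j] by simp
          qed
        qed
      next
        case ak: False
        define i where "i = a - k"
        have i: "i < k" "a = i + k" unfolding i_def using a ak by arith+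
        show "(if b < k then if a < k then 0 else - \<Delta> $$ (b, a - k) else if a < k then \<Delta> $$ (b - k, a) else 0) * ?f a =
          - ((if a < k then if b < k then 0 else - \<Delta> $$ (a, b - k) else if b < k then \<Delta> $$ (a - k, b) else 0) * ?f b)"
        proof (cases "b < k")
          case bk: True
          show ?thesis
          proof (cases "b = i")
            case True then show ?thesis using ak bk i by simp
          next
            case False then show ?thesis using ak bk i dg[of b i] dg[of i b] by simp
          qed
        next
          case False then show ?thesis using ak by simp
        qed
      qed
    qed (insert Lc, auto)
    have "M * X * ?Nt = ?J * X * L"
      unfolding eq L_def by (rule assoc_mult_mat[OF JXc Sc Ntc])
    then show "transpose_mat X * ?J * X = Jmat k \<and>
           (\<exists>L. L \<in> carrier_mat (2*k) (2*k) \<and> transpose_mat L = - L \<and> M * X * ?Nt = ?J * X * L)"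
      using XJX Lc Lt by blast
  qed
qed

end
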